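(* Under the Setting and Algorithm in the context, suppose $\{\gamma_k\}$, $\{\eta_k\}$ and $s$ satisfy $$\frac{N-s+1}{2}\min_{k\in\mathcal N}\gamma_k\eta_k>D_{\mathcal X}^2+\frac12\sum_{k\in\mathcal B}\gamma_k^2L_f^2+\frac12\sum_{k\in\mathcal N}\gamma_k^2L_{g,\mathcal X}^2.$$ Then $$f(\bar x_{N,s})-f(x^* )\le\frac{2D_{\mathcal X}^2+\sum_{k\in\mathcal B}\gamma_k^2L_f^2+\sum_{k\in\mathcal N}\gamma_k^2L_{g,\mathcal X}^2}{(N-s+1)\min_{k\in\mathcal B}\gamma_k}$$ and $$G(\bar x_{N,s})\le\frac{\sum_{k\in\mathcal B}\gamma_k(\eta_k+\varepsilon_k)}{\sum_{k\in\mathcal B}\gamma_k}.$$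
   Context: Setting. $\mathcal X\subset\mathbb R^n$ is convex and compact; $f:\mathcal X\to\mathbb R$ is convex and $L_f$-Lipschitz; $\Delta\subset\mathbb R^d$ is compact; $g:\mathcal X\times\Delta\to\mathbb R$ is such that for every $\delta\in\Delta$, $x\mapsto g(x,\delta)$ is convex and $L_{g,\mathcal X}$-Lipschitz, and for every $x\in\mathcal X$, $\delta\mapsto g(x,\delta)$ is $L_{g,\Delta}$-Lipschitz. Let $G(x):=\max_{\delta\in\Delta}g(x,\delta)$ and assume the problem $\min_{x\in\mathcal X}\{f(x):G(x)\le0\}$ has an optimal solution $x^*$. Norms are Euclidean. $f'(x)$ denotes a subgradient of $f$ at $x$ and $g'(x,\delta)$ a subgradient of $g(\cdot,\delta)$ at $x$. Let $\omega_{\mathcal X}:\mathcal X\to\mathbb R$ be continuously differentiable and $1$-strongly convex; $V(x,z):=\omega_{\mathcal X}(z)-\omega_{\mathcal X}(x)-\langle\nabla\omega_{\mathcal X}(x),z-x\rangle$; prox-mapping $P_{x,\mathcal X}(y):=\arg\min_{z\in\mathcal X}\{\langle y,z\rangle+V(x,z)\}$; $D_{\mathcal X}:=\sqrt{\max_{x,z\in\mathcal X}V(x,z)}$. Algorithm (inexact CSA). Inputs: $N\ge1$, $x_1\in\mathcal X$, tolerances $\eta_k>0$, step-sizes $\gamma_k>0$. For $k=1,\dots,N$: choose some $\delta_k\in\Delta$ (an approximate maximizer of $g(x_k,\cdot)$); set $h_k=f'(x_k)$ if $g(x_k,\delta_k)\le\eta_k$ and $h_k=g'(x_k,\delta_k)$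 otherwise; set $x_{k+1}=P_{x_k,\mathcal X}(\gamma_kh_k)$. For $1\le s\le N$ let $I=\{s,\dots,N\}$, $\mathcal B:=\{k\in I: g(x_k,\delta_k)\le\eta_k\}$, $\mathcal N:=I\setminus\mathcal B$, and output $\bar x_{N,s}:=\sum_{k\in\mathcal B}\gamma_kx_k/\sum_{k\in\mathcal B}\gamma_k$. The cut-generation errors are $\varepsilon_k:=G(x_k)-g(x_k,\delta_k)\ge0$. (The minimum over an empty set is $+\infty$.) *)

theory Defs
  imports "HOL-Analysis.Analysis"
begin

definition strongly_convex_on :: "'a::real_normed_vector set \<Rightarrow> real \<Rightarrow> ('a \<Rightarrow> real) \<Rightarrow> bool" where
  "strongly_convex_on X c w \<longleftrightarrow>
     (\<forall>x\<in>X. \<forall>y\<in>X. \<forall>t::real. 0 \<le> t \<and> t \<le> 1 \<longrightarrow>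
        w ((1 - t) *\<^sub>R x + t *\<^sub>R y) \<le> (1 - t) * w x + t * w y - c / 2 * t * (1 - t) * (norm (x - y))\<^sup>2)"

definition bregman :: "('a::real_inner \<Rightarrow> real) \<Rightarrow> ('a \<Rightarrow> 'a) \<Rightarrow> 'a \<Rightarrow> 'a \<Rightarrow> real" where
  "bregman w dw x z = w z - w x - inner (dw x) (z - x)"

definition is_prox :: "'a::real_inner set \<Rightarrow> ('a \<Rightarrow> real) \<Rightarrow> ('a \<Rightarrow> 'a) \<Rightarrow> 'a \<Rightarrow> 'a \<Rightarrow> 'a \<Rightarrow> bool" where
  "is_prox X w dw x y p \<longleftrightarrow> p \<in> X \<and>
     (\<forall>z\<in>X. inner y p + bregman w dw x p \<le> inner y z + bregman w dw x z)"

definition diam2 :: "'a::real_inner set \<Rightarrow> ('a \<Rightarrow> real) \<Rightarrow> ('a \<Rightarrow> 'a) \<Rightarrow> real" where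
  "diam2 X w dw = (SUP p\<in>X \<times> X. bregman w dw (fst p) (snd p))"

definition is_subgrad :: "'a::real_inner set \<Rightarrow> ('a \<Rightarrow> real) \<Rightarrow> 'a \<Rightarrow> 'a \<Rightarrow> bool" where
  "is_subgrad X f x v \<longleftrightarrow> (\<forall>z\<in>X. f x + inner v (z - x) \<le> f z)"

definition maxG :: "('a \<Rightarrow> 'b \<Rightarrow> real) \<Rightarrow> 'b set \<Rightarrow> 'a \<Rightarrow> real" where
  "maxG g D x = (SUP d\<in>D. g x d)"

definition csaB :: "('a \<Rightarrow> 'b \<Rightarrow> real) \<Rightarrow> (nat \<Rightarrow> 'a) \<Rightarrow> (nat \<Rightarrow> 'b) \<Rightarrow> (nat \<Rightarrow> real) \<Rightarrow> nat \<Rightarrow> nat \<Rightarrow> nat set" where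
  "csaB g x d eta s N = {k \<in> {s..N}. g (x k) (d k) \<le> eta k}"

definition csaN :: "('a \<Rightarrow> 'b \<Rightarrow> real) \<Rightarrow> (nat \<Rightarrow> 'a) \<Rightarrow> (nat \<Rightarrow> 'b) \<Rightarrow> (nat \<Rightarrow> real) \<Rightarrow> nat \<Rightarrow> nat \<Rightarrow> nat set" where
  "csaN g x d eta s N = {k \<in> {s..N}. \<not> g (x k) (d k) \<le> eta k}"

definition csa_out :: "(nat \<Rightarrow> real) \<Rightarrow> (nat \<Rightarrow> 'a::real_vector) \<Rightarrow> nat set \<Rightarrow> 'a" where
  "csa_out gam x B = (1 / (\<Sum>k\<in>B. gam k)) *\<^sub>R (\<Sum>k\<in>B. gam k *\<^sub>R x k)"

end

theory Submission
  imports Defs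
begin

lemma dirderiv:
  fixes w :: "'a::real_inner \<Rightarrow> real"
  assumes cx: "convex X" and p: "p\<in>X" and z: "z\<in>X"
   and der: "(w has_derivative (\<lambda>h. inner (dw p) h)) (at p within X)"
  shows "((\<lambda>t. (w (p + t *\<^sub>R (z - p)) - w p) / t) \<longlongrightarrow> inner (dw p) (z - p)) (at_right 0)"
proof -
  let ?l = "\<lambda>t::real. p + t *\<^sub>R (z - p)"
  have l: "(?l has_derivative (\<lambda>t. t *\<^sub>R (z-p))) (at 0 within {0..1})"
    by (auto intro!: derivative_eq_intros)
  have sub: "?l ` {0..1} \<subseteq> X"
  proof
    fix y assume "y \<in> ?l ` {0..1}"
    then obtain t where t: "0 \<le> t" "t \<le> 1" "y = ?l t" by auto
    have "(1 - t) *\<^sub>R p + t *\<^sub>R z \<in> X" using cx p z t unfolding convex_alt by blast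
    moreover have "(1 - t) *\<^sub>R p + t *\<^sub>R z = ?l t" by (simp add: algebra_simps)
    ultimately show "y \<in> X" using t by simp
  qed
  have w': "(w has_derivative (\<lambda>h. inner (dw p) h)) (at (?l 0) within ?l ` {0..1})"
    using has_derivative_subset[OF der sub] by simp
  have "((w \<circ> ?l) has_derivative ((\<lambda>h. inner (dw p) h) \<circ> (\<lambda>t. t *\<^sub>R (z-p)))) (at 0 within {0..1})"
    by (rule diff_chain_within[OF l w'])
  moreover have "((\<lambda>h. inner (dw p) h) \<circ> (\<lambda>t. t *\<^sub>R (z-p))) = (*) (inner (dw p) (z - p))"
    by (auto simp: o_def fun_eq_iff)
  ultimately have "((w \<circ> ?l) has_field_derivative inner (dw p) (z-p)) (at 0 within {0..1})"
    unfolding has_field_derivative_def by simp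
  then have "((\<lambda>t. ((w\<circ>?l) t - (w\<circ>?l) 0)/(t - 0)) \<longlongrightarrow> inner (dw p) (z-p)) (at 0 within {0..1})"
    by (simp only: has_field_derivative_iff)
  then show ?thesis using at_within_Icc_at_right[of 0 "1::real"] by (simp add: o_def)
qed

lemma breg_lower:
  fixes w :: "'a::real_inner \<Rightarrow> real"
  assumes cx: "convex X" and p: "p\<in>X" and z: "z\<in>X"
   and der: "(w has_derivative (\<lambda>h. inner (dw p) h)) (at p within X)"
   and sc: "strongly_convex_on X 1 w"
  shows "bregman w dw p z \<ge> (norm (z - p))\<^sup>2 / 2"
proof -
  have lim: "((\<lambda>t. (w (p + t *\<^sub>R (z - p)) - w p) / t) \<longlongrightarrow> inner (dw p) (z - p)) (at_right 0)"
    by (rule dirderiv[where w=w and dw=dw, OF cx p z der])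
  have lim2: "((\<lambda>t. w z - w p - (1 - t) / 2 * (norm (z - p))\<^sup>2) \<longlongrightarrow> w z - w p - (1 - 0) / 2 * (norm (z - p))\<^sup>2) (at_right (0::real))"
    by (intro tendsto_intros) simp
  have ev: "\<forall>\<^sub>F t in at_right 0. (w (p + t *\<^sub>R (z - p)) - w p) / t \<le> w z - w p - (1 - t) / 2 * (norm (z - p))\<^sup>2"
  proof -
    have "\<forall>\<^sub>F t in at_right (0::real). t \<in> {0<..<1}" by (rule eventually_at_right_real) simp
    then show ?thesis
    proof eventually_elim
      case (elim t)
      have "w ((1 - t) *\<^sub>R p + t *\<^sub>R z) \<le> (1 - t) * w p + t * w z - 1 / 2 * t * (1 - t) * (norm (p - z))\<^sup>2"
        using sc p z elim unfolding strongly_convex_on_def by auto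
      moreover have "(1 - t) *\<^sub>R p + t *\<^sub>R z = p + t *\<^sub>R (z - p)" by (simp add: algebra_simps)
      moreover have "norm (p - z) = norm (z - p)" by (rule norm_minus_commute)
      ultimately have "w (p + t *\<^sub>R (z - p)) - w p \<le> t * (w z - w p - (1 - t) / 2 * (norm (z - p))\<^sup>2)"
        by (simp add: algebra_simps)
      then show ?case using elim by (simp add: divide_simps mult.commute)
    qed
  qed
  have "inner (dw p) (z - p) \<le> w z - w p - (1 - 0) / 2 * (norm (z - p))\<^sup>2"
    by (rule tendsto_le[OF _ lim2 lim ev]) simp
  then show ?thesis unfolding bregman_def by simp
qed

lemma first_order:
  fixes w :: "'a::real_inner \<Rightarrow> real"
  assumes cx: "convex X" and pr: "is_prox X w dw x y p" and z: "z\<in>X"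
   and der: "(w has_derivative (\<lambda>h. inner (dw p) h)) (at p within X)"
  shows "inner (y + dw p - dw x) (z - p) \<ge> 0"
proof -
  have p: "p \<in> X" and mn: "\<forall>z\<in>X. inner y p + bregman w dw x p \<le> inner y z + bregman w dw x z"
    using pr unfolding is_prox_def by auto
  have lim: "((\<lambda>t. (w (p + t *\<^sub>R (z - p)) - w p) / t) \<longlongrightarrow> inner (dw p) (z - p)) (at_right 0)"
    by (rule dirderiv[where w=w and dw=dw, OF cx p z der])
  have lim2: "((\<lambda>t. inner (y - dw x) (z - p) + (w (p + t *\<^sub>R (z - p)) - w p) / t) \<longlongrightarrow> inner (y - dw x) (z - p) + inner (dw p) (z - p)) (at_right 0)"
    by (intro tendsto_intros lim)
  have ev: "\<forall>\<^sub>F t in at_right 0. 0 \<le> inner (y - dw x) (z - p) + (w (p + t *\<^sub>R (z - p)) - w p) / t"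
  proof -
    have "\<forall>\<^sub>F t in at_right (0::real). t \<in> {0<..<1}" by (rule eventually_at_right_real) simp
    then show ?thesis
    proof eventually_elim
      case (elim t)
      have "(1 - t) *\<^sub>R p + t *\<^sub>R z \<in> X" using cx p z elim unfolding convex_alt by auto
      moreover have "(1 - t) *\<^sub>R p + t *\<^sub>R z = p + t *\<^sub>R (z - p)" by (simp add: algebra_simps)
      ultimately have "p + t *\<^sub>R (z - p) \<in> X" by simp
      then have "inner y p + bregman w dw x p \<le> inner y (p + t *\<^sub>R (z - p)) + bregman w dw x (p + t *\<^sub>R (z - p))"
        using mn by blast
      then have "0 \<le> t * inner (y - dw x) (z - p) + (w (p + t *\<^sub>R (z - p)) - w p)"
        unfolding bregman_def by (simp add: inner_simps algebra_simps)
      then have "0 \<le> (t * inner (y - dw x) (z - p) + (w (p + t *\<^sub>R (z - p)) - w p)) / t"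
        using elim by simp
      also have "\<dots> = inner (y - dw x) (z - p) + (w (p + t *\<^sub>R (z - p)) - w p) / t"
        using elim by (simp add: field_simps)
      finally show ?case .
    qed
  qed
  have "0 \<le> inner (y - dw x) (z - p) + inner (dw p) (z - p)"
    by (rule tendsto_lowerbound[OF lim2 ev]) simp
  then show ?thesis by (simp add: inner_simps)
qed

lemma step_ineq:
  fixes w :: "'a::real_inner \<Rightarrow> real"
  assumes cx: "convex X" and x: "x \<in> X" and pr: "is_prox X w dw x y p" and z: "z\<in>X"
   and derx: "(w has_derivative (\<lambda>h. inner (dw x) h)) (at x within X)"
   and derp: "(w has_derivative (\<lambda>h. inner (dw p) h)) (at p within X)"
   and sc: "strongly_convex_on X 1 w"
  shows "inner y (x - z) \<le> bregman w dw x z - bregman w dw p z + (norm y)\<^sup>2 / 2"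
proof -
  have p: "p \<in> X" using pr unfolding is_prox_def by auto
  have fo: "inner (y + dw p - dw x) (z - p) \<ge> 0"
    by (rule first_order[where w=w and dw=dw, OF cx pr z derp])
  have idt: "bregman w dw x z - bregman w dw x p - bregman w dw p z = inner (dw p - dw x) (z - p)"
    unfolding bregman_def by (simp add: inner_simps algebra_simps)
  have bl: "bregman w dw x p \<ge> (norm (p - x))\<^sup>2 / 2"
    by (rule breg_lower[where w=w and dw=dw, OF cx x p derx sc])
  have cs: "inner y (x - p) \<le> norm y * norm (x - p)" by (rule norm_cauchy_schwarz)
  have sq: "norm y * norm (x - p) \<le> (norm y)\<^sup>2 / 2 + (norm (x - p))\<^sup>2 / 2"
    using sum_squares_bound[of "norm y" "norm (x - p)"] by simp
  have nm: "norm (x - p) = norm (p - x)" by (rule norm_minus_commute)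
  have bl': "bregman w dw x p \<ge> (norm (x - p))\<^sup>2 / 2" using bl nm by simp
  have "inner y (x - z) = inner y (x - p) + inner y (p - z)" by (simp add: inner_simps)
  moreover have "inner y (p - z) = - inner y (z - p)" by (simp add: inner_simps)
  moreover have "inner (y + dw p - dw x) (z - p) = inner y (z - p) + inner (dw p - dw x) (z - p)"
    by (simp add: inner_simps)
  ultimately show ?thesis using fo idt bl' cs sq by linarith
qed

lemma avg_jensen:
  fixes x :: "nat \<Rightarrow> 'a::real_vector"
  assumes cx: "convex X" and cf: "convex_on X F" and fin: "finite B" and ne: "B \<noteq> {}"
    and gp: "\<forall>k\<in>B. gam k > 0" and xs: "\<forall>k\<in>B. x k \<in> X"
  shows "csa_out gam x B \<in> X \<and> F (csa_out gam x B) \<le> (\<Sum>k\<in>B. gam k * F (x k)) / (\<Sum>k\<in>B. gam k)"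
proof -
  define G where "G = (\<Sum>k\<in>B. gam k)"
  have Gp: "G > 0" unfolding G_def using fin ne gp by (simp add: sum_pos)
  have eq: "csa_out gam x B = (\<Sum>k\<in>B. (gam k / G) *\<^sub>R x k)"
    unfolding csa_out_def G_def by (simp add: scaleR_sum_right divide_inverse mult.commute)
  have s1: "(\<Sum>k\<in>B. gam k / G) = 1" using Gp unfolding G_def by (simp add: sum_divide_distrib[symmetric])
  have nn: "\<And>k. k \<in> B \<Longrightarrow> 0 \<le> gam k / G" using gp Gp by (simp add: less_imp_le)
  have xs': "\<And>k. k \<in> B \<Longrightarrow> x k \<in> X" using xs by auto
  have m: "csa_out gam x B \<in> X" unfolding eq by (rule convex_sum[OF fin cx s1 nn xs'])
  have "F (csa_out gam x B) \<le> (\<Sum>k\<in>B. gam k / G * F (x k))"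
    unfolding eq by (rule convex_on_sum[OF fin ne cf s1 nn xs'])
  also have "\<dots> = (\<Sum>k\<in>B. gam k * F (x k)) / G" by (simp add: sum_divide_distrib)
  finally show ?thesis using m unfolding G_def by simp
qed

lemma bdd_lip:
  fixes h :: "'b::metric_space \<Rightarrow> real"
  assumes "compact D" and "L-lipschitz_on D h"
  shows "bdd_above (h ` D)"
proof -
  have "continuous_on D h" using assms(2) by (rule lipschitz_on_continuous_on)
  then have "compact (h ` D)" using assms(1) by (rule compact_continuous_image)
  then show ?thesis by (rule bounded_imp_bdd_above[OF compact_imp_bounded])
qed

lemma breg_bdd:
  fixes w :: "'a::real_inner \<Rightarrow> real"
  assumes cp: "compact X" and der: "\<forall>z\<in>X. (w has_derivative (\<lambda>h. inner (dw z) h)) (at z within X)"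
    and cd: "continuous_on X dw"
  shows "bdd_above ((\<lambda>p. bregman w dw (fst p) (snd p)) ` (X \<times> X))"
proof -
  have cw: "continuous_on X w"
    unfolding continuous_on_eq_continuous_within using der has_derivative_continuous by blast
  have c1: "continuous_on (X \<times> X) (\<lambda>p. w (snd p))"
    by (rule continuous_on_compose2[OF cw continuous_on_snd]) auto
  have c2: "continuous_on (X \<times> X) (\<lambda>p. w (fst p))"
    by (rule continuous_on_compose2[OF cw continuous_on_fst]) auto
  have c3: "continuous_on (X \<times> X) (\<lambda>p. dw (fst p))"
    by (rule continuous_on_compose2[OF cd continuous_on_fst]) auto
  have "continuous_on (X \<times> X) (\<lambda>p. bregman w dw (fst p) (snd p))"
    unfolding bregman_def by (intro continuous_intros c1 c2 c3)
  then have "compact ((\<lambda>p. bregman w dw (fst p) (snd p)) ` (X \<times> X))"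
    using compact_Times[OF cp cp] by (rule compact_continuous_image)
  then show ?thesis by (rule bounded_imp_bdd_above[OF compact_imp_bounded])
qed

theorem mainTheorem17:
  fixes X :: "'a::euclidean_space set" and D :: "'b::euclidean_space set"
    and f :: "'a \<Rightarrow> real" and g :: "'a \<Rightarrow> 'b \<Rightarrow> real"
    and Lf LgX LgD :: real
    and xopt :: 'a
    and w :: "'a \<Rightarrow> real" and dw :: "'a \<Rightarrow> 'a"
    and N s :: nat and x :: "nat \<Rightarrow> 'a" and d :: "nat \<Rightarrow> 'b"
    and eta gam :: "nat \<Rightarrow> real"
    and fsub gsub :: "nat \<Rightarrow> 'a"
  assumes X_convex: "convex X" and X_compact: "compact X"
    and f_convex: "convex_on X f" and f_lip: "Lf-lipschitz_on X f"
    and D_compact: "compact D"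
    and g_convex: "\<forall>e\<in>D. convex_on X (\<lambda>z. g z e)"
    and g_lipX: "\<forall>e\<in>D. LgX-lipschitz_on X (\<lambda>z. g z e)"
    and g_lipD: "\<forall>z\<in>X. LgD-lipschitz_on D (\<lambda>e. g z e)"
    and xopt_feas: "xopt \<in> X" "maxG g D xopt \<le> 0"
    and xopt_opt: "\<forall>z\<in>X. maxG g D z \<le> 0 \<longrightarrow> f xopt \<le> f z"
    and w_deriv: "\<forall>z\<in>X. (w has_derivative (\<lambda>h. inner (dw z) h)) (at z within X)"
    and w_C1: "continuous_on X dw"
    and w_sc: "strongly_convex_on X 1 w"
    and N_pos: "1 \<le> N" and s_range: "1 \<le> s" "s \<le> N"
    and x1: "x 1 \<in> X"
    and eta_pos: "\<forall>k\<in>{1..N}. eta k > 0"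
    and gam_pos: "\<forall>k\<in>{1..N}. gam k > 0"
    and d_in: "\<forall>k\<in>{1..N}. d k \<in> D"
    and fsub: "\<forall>k\<in>{1..N}. is_subgrad X f (x k) (fsub k) \<and> norm (fsub k) \<le> Lf"
    and gsub: "\<forall>k\<in>{1..N}. is_subgrad X (\<lambda>z. g z (d k)) (x k) (gsub k) \<and> norm (gsub k) \<le> LgX"
    and step: "\<forall>k\<in>{1..N}. is_prox X w dw (x k)
                 (gam k *\<^sub>R (if g (x k) (d k) \<le> eta k then fsub k else gsub k)) (x (Suc k))"
    and cond: "csaN g x d eta s N = {} \<or>
        real (N - s + 1) / 2 * (MIN k\<in>csaN g x d eta s N. gam k * eta k)
          > diam2 X w dw + 1/2 * (\<Sum>k\<in>csaB g x d eta s N. (gam k)\<^sup>2 * Lf\<^sup>2)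
              + 1/2 * (\<Sum>k\<in>csaN g x d eta s N. (gam k)\<^sup>2 * LgX\<^sup>2)"
  shows "csaB g x d eta s N \<noteq> {} \<and>
    f (csa_out gam x (csaB g x d eta s N)) - f xopt
      \<le> (2 * diam2 X w dw + (\<Sum>k\<in>csaB g x d eta s N. (gam k)\<^sup>2 * Lf\<^sup>2)
           + (\<Sum>k\<in>csaN g x d eta s N. (gam k)\<^sup>2 * LgX\<^sup>2))
        / (real (N - s + 1) * (MIN k\<in>csaB g x d eta s N. gam k)) \<and>
    maxG g D (csa_out gam x (csaB g x d eta s N))
      \<le> (\<Sum>k\<in>csaB g x d eta s N. gam k * (eta k + (maxG g D (x k) - g (x k) (d k))))
        / (\<Sum>k\<in>csaB g x d eta s N. gam k)"
proof -
  define B where "B = csaB g x d eta s N"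
  define NN where "NN = csaN g x d eta s N"
  define I where "I = {s..N}"
  define Vo where "Vo = (\<lambda>k. bregman w dw (x k) xopt)"
  define D2 where "D2 = diam2 X w dw"
  define y where "y = (\<lambda>k. gam k *\<^sub>R (if g (x k) (d k) \<le> eta k then fsub k else gsub k))"
  have finI: "finite I" unfolding I_def by simp
  have BI: "B \<subseteq> I" and NI: "NN \<subseteq> I" unfolding B_def NN_def I_def csaB_def csaN_def by auto
  have finB: "finite B" and finN: "finite NN" using finI BI NI finite_subset by auto
  have BN_un: "B \<union> NN = I" and BN_dis: "B \<inter> NN = {}"
    unfolding B_def NN_def I_def csaB_def csaN_def by auto
  have I1: "\<And>k. k \<in> I \<Longrightarrow> k \<in> {1..N}" unfolding I_def using s_range by auto
  have Bk: "\<And>k. k \<in> B \<Longrightarrow> k \<in> {1..N} \<and> g (x k) (d k) \<le> eta k"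
    unfolding B_def csaB_def using s_range by auto
  have Nk: "\<And>k. k \<in> NN \<Longrightarrow> k \<in> {1..N} \<and> \<not> g (x k) (d k) \<le> eta k"
    unfolding NN_def csaN_def using s_range by auto
  have cardI: "card I = N - s + 1" unfolding I_def using s_range by simp
  have cardBN: "real (card B) + real (card NN) = real (N - s + 1)"
    using card_Un_disjoint[OF finB finN BN_dis] BN_un cardI by simp
  have prox: "\<And>k. k \<in> {1..N} \<Longrightarrow> is_prox X w dw (x k) (y k) (x (Suc k))"
    using step unfolding y_def by auto
  have xin: "\<And>k. k \<in> {1..N} \<Longrightarrow> x k \<in> X"
  proof -
    fix k :: nat assume k: "k \<in> {1..N}"
    show "x k \<in> X"
    proof (cases "k = 1")
      case True then show ?thesis using x1 by simp
    next
      case False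
      then obtain j where j: "k = Suc j" "j \<in> {1..N}" using k by (cases k) auto
      then show ?thesis using prox[OF j(2)] unfolding is_prox_def by auto
    qed
  qed
  have xinS: "\<And>k. k \<in> {1..N} \<Longrightarrow> x (Suc k) \<in> X"
    using prox unfolding is_prox_def by auto
  have der: "\<And>z. z \<in> X \<Longrightarrow> (w has_derivative (\<lambda>h. inner (dw z) h)) (at z within X)"
    using w_deriv by auto
  have stp: "\<And>k. k \<in> I \<Longrightarrow> inner (y k) (x k - xopt) \<le> Vo k - Vo (Suc k) + (norm (y k))\<^sup>2 / 2"
  proof -
    fix k assume k: "k \<in> I"
    have k1: "k \<in> {1..N}" using I1[OF k] .
    show "inner (y k) (x k - xopt) \<le> Vo k - Vo (Suc k) + (norm (y k))\<^sup>2 / 2"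
      unfolding Vo_def
      by (rule step_ineq[where w=w and dw=dw, OF X_convex xin[OF k1] prox[OF k1] xopt_feas(1)
            der[OF xin[OF k1]] der[OF xinS[OF k1]] w_sc])
  qed
  have tele: "(\<Sum>k\<in>I. Vo k - Vo (Suc k)) = Vo s - Vo (Suc N)"
  proof -
    have "(\<Sum>k\<in>I. Vo (Suc k) - Vo k) = Vo (Suc N) - Vo s"
      unfolding I_def using s_range by (intro sum_Suc_diff) simp
    then show ?thesis by (simp add: sum_subtractf)
  qed
  have bddV: "bdd_above ((\<lambda>p. bregman w dw (fst p) (snd p)) ` (X \<times> X))"
    by (rule breg_bdd[OF X_compact w_deriv w_C1])
  have Vs: "Vo s \<le> D2"
  proof -
    have "(x s, xopt) \<in> X \<times> X" using xin[of s] s_range xopt_feas(1) by auto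
    then have "bregman w dw (fst (x s, xopt)) (snd (x s, xopt)) \<le> D2"
      unfolding D2_def diam2_def by (rule cSUP_upper[OF _ bddV])
    then show ?thesis unfolding Vo_def by simp
  qed
  have VN: "Vo (Suc N) \<ge> 0"
  proof -
    have "Vo (Suc N) \<ge> (norm (xopt - x (Suc N)))\<^sup>2 / 2" unfolding Vo_def
      using N_pos by (intro breg_lower[where w=w and dw=dw, OF X_convex xinS[of N] xopt_feas(1) der[OF xinS[of N]] w_sc]) auto
    then show ?thesis using zero_le_power2[of "norm (xopt - x (Suc N))"] by linarith
  qed
  have Vs0: "Vo s \<ge> 0"
  proof -
    have "Vo s \<ge> (norm (xopt - x s))\<^sup>2 / 2" unfolding Vo_def
      using s_range by (intro breg_lower[where w=w and dw=dw, OF X_convex xin[of s] xopt_feas(1) der[OF xin[of s]] w_sc]) auto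
    then show ?thesis using zero_le_power2[of "norm (xopt - x s)"] by linarith
  qed
  have sumI: "(\<Sum>k\<in>I. inner (y k) (x k - xopt)) \<le> D2 + (\<Sum>k\<in>I. (norm (y k))\<^sup>2 / 2)"
  proof -
    have "(\<Sum>k\<in>I. inner (y k) (x k - xopt)) \<le> (\<Sum>k\<in>I. Vo k - Vo (Suc k) + (norm (y k))\<^sup>2 / 2)"
      by (rule sum_mono) (rule stp)
    also have "\<dots> = Vo s - Vo (Suc N) + (\<Sum>k\<in>I. (norm (y k))\<^sup>2 / 2)"
      by (simp add: sum.distrib tele)
    finally show ?thesis using Vs VN by linarith
  qed
  have gopt: "\<And>e. e \<in> D \<Longrightarrow> g xopt e \<le> 0"
  proof -
    fix e assume e: "e \<in> D"
    have "bdd_above ((\<lambda>e. g xopt e) ` D)"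
      using g_lipD xopt_feas(1) by (intro bdd_lip[OF D_compact]) auto
    then have "g xopt e \<le> maxG g D xopt" unfolding maxG_def by (rule cSUP_upper[OF e])
    then show "g xopt e \<le> 0" using xopt_feas(2) by simp
  qed
  define SB where "SB = (\<Sum>k\<in>B. gam k * (f (x k) - f xopt))"
  define SN where "SN = (\<Sum>k\<in>NN. gam k * eta k)"
  define QB where "QB = (\<Sum>k\<in>B. (gam k)\<^sup>2 * Lf\<^sup>2)"
  define QN where "QN = (\<Sum>k\<in>NN. (gam k)\<^sup>2 * LgX\<^sup>2)"
  define R where "R = D2 + 1/2 * QB + 1/2 * QN"
  have inB: "\<And>k. k \<in> B \<Longrightarrow> gam k * (f (x k) - f xopt) \<le> inner (y k) (x k - xopt)"
  proof -
    fix k assume k: "k \<in> B"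
    have k1: "k \<in> {1..N}" and c: "g (x k) (d k) \<le> eta k" using Bk[OF k] by auto
    have "f (x k) + inner (fsub k) (xopt - x k) \<le> f xopt"
      using fsub k1 xopt_feas(1) unfolding is_subgrad_def by auto
    then have "f (x k) - f xopt \<le> inner (fsub k) (x k - xopt)" by (simp add: inner_diff_right)
    then have "gam k * (f (x k) - f xopt) \<le> gam k * inner (fsub k) (x k - xopt)"
      using gam_pos k1 by (intro mult_left_mono) (auto intro: less_imp_le)
    then show "gam k * (f (x k) - f xopt) \<le> inner (y k) (x k - xopt)" unfolding y_def using c by simp
  qed
  have nB: "\<And>k. k \<in> B \<Longrightarrow> (norm (y k))\<^sup>2 / 2 \<le> (gam k)\<^sup>2 * Lf\<^sup>2 / 2"
  proof -
    fix k assume k: "k \<in> B"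
    have k1: "k \<in> {1..N}" and c: "g (x k) (d k) \<le> eta k" using Bk[OF k] by auto
    have "(norm (fsub k))\<^sup>2 \<le> Lf\<^sup>2" using fsub k1 by (intro power_mono) auto
    then have "(gam k)\<^sup>2 * (norm (fsub k))\<^sup>2 \<le> (gam k)\<^sup>2 * Lf\<^sup>2" by (intro mult_left_mono) auto
    then show "(norm (y k))\<^sup>2 / 2 \<le> (gam k)\<^sup>2 * Lf\<^sup>2 / 2" unfolding y_def using c
      by (simp add: power_mult_distrib)
  qed
  have inN: "\<And>k. k \<in> NN \<Longrightarrow> gam k * eta k \<le> inner (y k) (x k - xopt)"
  proof -
    fix k assume k: "k \<in> NN"
    have k1: "k \<in> {1..N}" and c: "\<not> g (x k) (d k) \<le> eta k" using Nk[OF k] by auto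
    have "g (x k) (d k) + inner (gsub k) (xopt - x k) \<le> g xopt (d k)"
      using gsub k1 xopt_feas(1) unfolding is_subgrad_def by auto
    moreover have "g xopt (d k) \<le> 0" using gopt d_in k1 by auto
    ultimately have "eta k \<le> inner (gsub k) (x k - xopt)" using c by (simp add: inner_diff_right)
    then have "gam k * eta k \<le> gam k * inner (gsub k) (x k - xopt)"
      using gam_pos k1 by (intro mult_left_mono) (auto intro: less_imp_le)
    then show "gam k * eta k \<le> inner (y k) (x k - xopt)" unfolding y_def using c by simp
  qed
  have nN: "\<And>k. k \<in> NN \<Longrightarrow> (norm (y k))\<^sup>2 / 2 \<le> (gam k)\<^sup>2 * LgX\<^sup>2 / 2"
  proof -
    fix k assume k: "k \<in> NN"
    have k1: "k \<in> {1..N}" and c: "\<not> g (x k) (d k) \<le> eta k" using Nk[OF k] by auto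
    have "(norm (gsub k))\<^sup>2 \<le> LgX\<^sup>2" using gsub k1 by (intro power_mono) auto
    then have "(gam k)\<^sup>2 * (norm (gsub k))\<^sup>2 \<le> (gam k)\<^sup>2 * LgX\<^sup>2" by (intro mult_left_mono) auto
    then show "(norm (y k))\<^sup>2 / 2 \<le> (gam k)\<^sup>2 * LgX\<^sup>2 / 2" unfolding y_def using c
      by (simp add: power_mult_distrib)
  qed
  have key: "SB + SN \<le> R"
  proof -
    have "SB \<le> (\<Sum>k\<in>B. inner (y k) (x k - xopt))" unfolding SB_def by (rule sum_mono) (rule inB)
    moreover have "SN \<le> (\<Sum>k\<in>NN. inner (y k) (x k - xopt))" unfolding SN_def by (rule sum_mono) (rule inN)
    moreover have "(\<Sum>k\<in>B. (norm (y k))\<^sup>2 / 2) \<le> (\<Sum>k\<in>B. (gam k)\<^sup>2 * Lf\<^sup>2 / 2)" by (rule sum_mono) (rule nB)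
    moreover have "(\<Sum>k\<in>NN. (norm (y k))\<^sup>2 / 2) \<le> (\<Sum>k\<in>NN. (gam k)\<^sup>2 * LgX\<^sup>2 / 2)" by (rule sum_mono) (rule nN)
    moreover have "(\<Sum>k\<in>I. inner (y k) (x k - xopt)) = (\<Sum>k\<in>B. inner (y k) (x k - xopt)) + (\<Sum>k\<in>NN. inner (y k) (x k - xopt))"
      unfolding BN_un[symmetric] by (rule sum.union_disjoint[OF finB finN BN_dis])
    moreover have "(\<Sum>k\<in>I. (norm (y k))\<^sup>2 / 2) = (\<Sum>k\<in>B. (norm (y k))\<^sup>2 / 2) + (\<Sum>k\<in>NN. (norm (y k))\<^sup>2 / 2)"
      unfolding BN_un[symmetric] by (rule sum.union_disjoint[OF finB finN BN_dis])
    moreover have "(\<Sum>k\<in>B. (gam k)\<^sup>2 * Lf\<^sup>2 / 2) = 1/2 * QB" unfolding QB_def by (simp add: sum_divide_distrib)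
    moreover have "(\<Sum>k\<in>NN. (gam k)\<^sup>2 * LgX\<^sup>2 / 2) = 1/2 * QN" unfolding QN_def by (simp add: sum_divide_distrib)
    ultimately show ?thesis using sumI unfolding R_def by linarith
  qed
  have R0: "R \<ge> 0"
  proof -
    have "QB \<ge> 0" unfolding QB_def by (intro sum_nonneg) auto
    moreover have "QN \<ge> 0" unfolding QN_def by (intro sum_nonneg) auto
    ultimately show ?thesis unfolding R_def using Vs Vs0 by linarith
  qed
  have SN_low: "NN \<noteq> {} \<Longrightarrow> real (card NN) * (MIN k\<in>NN. gam k * eta k) \<le> SN"
    unfolding SN_def by (intro sum_bounded_below) (simp add: finN)
  have minN_pos: "NN \<noteq> {} \<Longrightarrow> (MIN k\<in>NN. gam k * eta k) > 0"
  proof -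
    assume ne: "NN \<noteq> {}"
    have "(MIN k\<in>NN. gam k * eta k) \<in> (\<lambda>k. gam k * eta k) ` NN" using finN ne by (intro Min_in) auto
    then obtain k where "k \<in> NN" "(MIN k\<in>NN. gam k * eta k) = gam k * eta k" by auto
    then show ?thesis using Nk gam_pos eta_pos by auto
  qed
  have condN: "NN \<noteq> {} \<Longrightarrow> real (N - s + 1) / 2 * (MIN k\<in>NN. gam k * eta k) > R"
    using cond unfolding NN_def[symmetric] B_def[symmetric] R_def D2_def QB_def QN_def by auto
  have Bne: "B \<noteq> {}"
  proof
    assume Be: "B = {}"
    then have NNI: "NN = I" using BN_un by auto
    then have ne: "NN \<noteq> {}" unfolding I_def using s_range by auto
    have "card NN = N - s + 1" using NNI cardI by simp
    then have "real (N - s + 1) * (MIN k\<in>NN. gam k * eta k) \<le> SN" using SN_low[OF ne] by simp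
    moreover have "SB = 0" unfolding SB_def Be by simp
    ultimately show False using key condN[OF ne] R0 by linarith
  qed
  define Gm where "Gm = (\<Sum>k\<in>B. gam k)"
  have gB: "\<forall>k\<in>B. gam k > 0" using Bk gam_pos by auto
  have xB: "\<forall>k\<in>B. x k \<in> X" using Bk xin by auto
  have Gp: "Gm > 0" unfolding Gm_def using finB Bne gB by (simp add: sum_pos)
  define mB where "mB = (MIN k\<in>B. gam k)"
  have mBp: "mB > 0"
  proof -
    have "mB \<in> gam ` B" unfolding mB_def using finB Bne by (intro Min_in) auto
    then show ?thesis using gB by auto
  qed
  have GmB: "real (card B) * mB \<le> Gm" unfolding Gm_def mB_def
    by (intro sum_bounded_below) (simp add: finB)
  have jf: "f (csa_out gam x B) \<le> (\<Sum>k\<in>B. gam k * f (x k)) / Gm"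
    using avg_jensen[OF X_convex f_convex finB Bne gB xB] unfolding Gm_def by simp
  have SBeq: "SB = (\<Sum>k\<in>B. gam k * f (x k)) - Gm * f xopt"
    unfolding SB_def Gm_def by (simp add: algebra_simps sum_subtractf sum_distrib_right sum_distrib_left)
  have fbar: "f (csa_out gam x B) - f xopt \<le> SB / Gm"
  proof -
    have "SB / Gm = (\<Sum>k\<in>B. gam k * f (x k)) / Gm - f xopt" using Gp unfolding SBeq by (simp add: field_simps)
    then show ?thesis using jf by simp
  qed
  have npos: "real (N - s + 1) > 0" by simp
  have fpart: "f (csa_out gam x B) - f xopt \<le> 2 * R / (real (N - s + 1) * mB)"
  proof (cases "SB \<le> 0")
    case True
    have "SB / Gm \<le> 0" using True Gp by (simp add: divide_nonpos_pos)
    moreover have "0 \<le> 2 * R / (real (N - s + 1) * mB)" using R0 mBp npos by simp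
    ultimately show ?thesis using fbar by linarith
  next
    case False
    then have SNR: "SN < R" using key by linarith
    have cN: "real (card NN) < real (N - s + 1) / 2"
    proof (rule ccontr)
      assume h: "\<not> real (card NN) < real (N - s + 1) / 2"
      then have ne: "NN \<noteq> {}" using npos by auto
      have "real (N - s + 1) / 2 * (MIN k\<in>NN. gam k * eta k) \<le> real (card NN) * (MIN k\<in>NN. gam k * eta k)"
        using h minN_pos[OF ne] by (intro mult_right_mono) auto
      then show False using SN_low[OF ne] condN[OF ne] SNR by linarith
    qed
    have "real (N - s + 1) / 2 * mB \<le> real (card B) * mB"
      using cN cardBN mBp by (intro mult_right_mono) auto
    then have Gl: "real (N - s + 1) / 2 * mB \<le> Gm" using GmB by linarith
    have SN0: "SN \<ge> 0" unfolding SN_def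
    proof (rule sum_nonneg)
      fix k assume "k \<in> NN"
      then have "k \<in> {1..N}" using Nk by auto
      then have "gam k > 0" "eta k > 0" using gam_pos eta_pos by auto
      then show "0 \<le> gam k * eta k" by simp
    qed
    have SBR: "SB \<le> R" using key SN0 by linarith
    have "SB / Gm \<le> R / (real (N - s + 1) / 2 * mB)"
      by (rule frac_le[OF R0 SBR _ Gl]) (use mBp npos in simp)
    also have "\<dots> = 2 * R / (real (N - s + 1) * mB)" by (simp add: field_simps)
    finally show ?thesis using fbar by linarith
  qed
  have gpart: "maxG g D (csa_out gam x B)
      \<le> (\<Sum>k\<in>B. gam k * (eta k + (maxG g D (x k) - g (x k) (d k)))) / Gm"
  proof -
    have Dne: "D \<noteq> {}" using d_in N_pos by auto
    show ?thesis unfolding maxG_def[of g D "csa_out gam x B"]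
    proof (rule cSUP_least[OF Dne])
      fix e assume e: "e \<in> D"
      have "g (csa_out gam x B) e \<le> (\<Sum>k\<in>B. gam k * g (x k) e) / Gm"
        using avg_jensen[OF X_convex _ finB Bne gB xB, of "\<lambda>z. g z e"] g_convex e unfolding Gm_def by simp
      also have "\<dots> \<le> (\<Sum>k\<in>B. gam k * (eta k + (maxG g D (x k) - g (x k) (d k)))) / Gm"
      proof (intro divide_right_mono sum_mono mult_left_mono)
        fix k assume k: "k \<in> B"
        have k1: "k \<in> {1..N}" and c: "g (x k) (d k) \<le> eta k" using Bk[OF k] by auto
        have "bdd_above ((\<lambda>e. g (x k) e) ` D)"
          using g_lipD xin[OF k1] by (intro bdd_lip[OF D_compact]) auto
        then have "g (x k) e \<le> maxG g D (x k)" unfolding maxG_def by (rule cSUP_upper[OF e])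
        then show "g (x k) e \<le> eta k + (maxG g D (x k) - g (x k) (d k))" using c by linarith
        show "0 \<le> gam k" using gB k by auto
      next
        show "0 \<le> Gm" using Gp by simp
      qed
      finally show "g (csa_out gam x B) e \<le> (\<Sum>k\<in>B. gam k * (eta k + (maxG g D (x k) - g (x k) (d k)))) / Gm" .
    qed
  qed
  have num: "2 * R = 2 * diam2 X w dw + (\<Sum>k\<in>B. (gam k)\<^sup>2 * Lf\<^sup>2) + (\<Sum>k\<in>NN. (gam k)\<^sup>2 * LgX\<^sup>2)"
    unfolding R_def D2_def QB_def QN_def by simp
  show ?thesis
    unfolding B_def[symmetric] NN_def[symmetric]
    using Bne fpart gpart num unfolding mB_def Gm_def by simp
qed

end
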